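(* Let $\alpha=[0;a_1,a_2,\ldots]\in\mathbf{Bad}$ and let $(p_n/q_n)_{n\ge1}$ be the sequence of its convergents. Assume that there exist a positive rational number $x$ and two sequences of finite words $(U_k)_{k\ge1}$ and $(V_k)_{k\ge1}$ over the positive integers such that, for every $k\ge1$, the sequence of partial quotients $a_1a_2\ldots$ of $\alpha$ begins with the word $V_kU_k\overline{U}_k$, and $|U_{k+1}|>|U_k|\ge x|V_k|$. Set $M=\limsup_{\ell\to+\infty}q_\ell^{1/\ell}$ and $m=\liminf_{\ell\to+\infty}q_\ell^{1/\ell}$. If $$x>\frac32\cdot\frac{\log M}{\log m}-\frac12,$$ then for every real number $\beta$ equal to $\alpha$ up to a rational homography one has $\inf_{q\ge1}q\cdot\Vert q\alpha\Vert\cdot\Vert q\beta\Vert=0$.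
   Context: For a real number $y$, $\Vert y\Vert$ denotes the distance from $y$ to the nearest integer. $\mathbf{Bad}=\{\alpha\in\mathbb{R} : \inf_{q\ge1} q\Vert q\alpha\Vert>0\}$ (equivalently, real numbers with bounded partial quotients). A finite word $W=w_1\ldots w_r$ over the positive integers is identified with the sequence of partial quotients $w_1,\ldots,w_r$; $|W|$ denotes its length and $\overline{W}=w_r\ldots w_1$ its mirror image. A real number $\beta$ is equal to $\alpha$ up to a rational homography if $\beta=(a\alpha+b)/(c\alpha+d)$ for some integers $a,b,c,d$ with $ad-bc\neq0$. *)

theory Defs
  imports "HOL-Analysis.Analysis"
begin

definition dnint :: "real \<Rightarrow> real" where
  "dnint y = min (frac y) (1 - frac y)"

definition Bad :: "real set" where
  "Bad = {\<alpha>. (INF q\<in>{1::nat..}. real q * dnint (real q * \<alpha>)) > 0}"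

text \<open>Numerators and denominators of the convergents of [0; a 1, a 2, ...]
  (the value a 0 is ignored; p 0 / q 0 = 0/1).\<close>
fun cfp :: "(nat \<Rightarrow> nat) \<Rightarrow> nat \<Rightarrow> nat" where
  "cfp a 0 = 0"
| "cfp a (Suc 0) = 1"
| "cfp a (Suc (Suc n)) = a (Suc (Suc n)) * cfp a (Suc n) + cfp a n"

fun cfq :: "(nat \<Rightarrow> nat) \<Rightarrow> nat \<Rightarrow> nat" where
  "cfq a 0 = 1"
| "cfq a (Suc 0) = a 1"
| "cfq a (Suc (Suc n)) = a (Suc (Suc n)) * cfq a (Suc n) + cfq a n"

definition is_cf_expansion :: "real \<Rightarrow> (nat \<Rightarrow> nat) \<Rightarrow> bool" where
  "is_cf_expansion \<alpha> a \<longleftrightarrow> (\<forall>n\<ge>1. a n > 0) \<and>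
     (\<lambda>n. real (cfp a n) / real (cfq a n)) \<longlonglongrightarrow> \<alpha>"

definition begins_with :: "(nat \<Rightarrow> nat) \<Rightarrow> nat list \<Rightarrow> bool" where
  "begins_with a W \<longleftrightarrow> (\<forall>i<length W. a (Suc i) = W ! i)"


end

theory Submission
  imports Defs
begin


datatype m2 = M2 int int int int

fun mmul :: "m2 \<Rightarrow> m2 \<Rightarrow> m2" where
  "mmul (M2 a b c d) (M2 e f g h) = M2 (a*e+b*g) (a*f+b*h) (c*e+d*g) (c*f+d*h)"

fun mtr :: "m2 \<Rightarrow> m2" where "mtr (M2 a b c d) = M2 a c b d"

fun mdet :: "m2 \<Rightarrow> int" where "mdet (M2 a b c d) = a*d - b*c"

definition mI :: m2 where "mI = M2 1 0 0 1"

definition mF :: "int \<Rightarrow> m2" where "mF k = M2 k 1 1 0"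

fun pl :: "int list \<Rightarrow> m2" where
  "pl [] = mI"
| "pl (x#xs) = mmul (mF x) (pl xs)"

lemma mmul_assoc: "mmul (mmul A B) C = mmul A (mmul B C)"
  by (cases A; cases B; cases C) (simp add: algebra_simps)

lemma mmul_I[simp]: "mmul mI A = A" "mmul A mI = A"
  by (cases A; simp add: mI_def)+

lemma mtr_mul: "mtr (mmul A B) = mmul (mtr B) (mtr A)"
  by (cases A; cases B) (simp add: algebra_simps)

lemma mtr_mtr[simp]: "mtr (mtr A) = A" by (cases A) simp

lemma mdet_mul: "mdet (mmul A B) = mdet A * mdet B"
  by (cases A; cases B) (simp add: algebra_simps)

lemma pl_append: "pl (xs @ ys) = mmul (pl xs) (pl ys)"
  by (induction xs) (simp_all add: mmul_assoc)

lemma pl_rev: "mtr (pl xs) = pl (rev xs)"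
  by (induction xs) (simp_all add: pl_append mtr_mul mI_def mF_def)

lemma pl_det: "mdet (pl xs) = (-1) ^ length xs"
  by (induction xs) (simp_all add: mdet_mul mI_def mF_def)

definition qm :: "(nat \<Rightarrow> nat) \<Rightarrow> nat \<Rightarrow> nat" where
  "qm a n = (if n = 0 then 0 else cfq a (n - 1))"
definition pm :: "(nat \<Rightarrow> nat) \<Rightarrow> nat \<Rightarrow> nat" where
  "pm a n = (if n = 0 then 1 else cfp a (n - 1))"

lemma cfq_Suc: "cfq a (Suc n) = a (Suc n) * cfq a n + qm a n"
  by (cases n) (simp_all add: qm_def)
lemma cfp_Suc: "cfp a (Suc n) = a (Suc n) * cfp a n + pm a n"
  by (cases n) (simp_all add: pm_def)

lemma pl_cf: "pl (map (\<lambda>i. int (a i)) [1..<Suc n]) =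
   M2 (cfq a n) (qm a n) (cfp a n) (pm a n)"
proof (induction n)
  case 0 then show ?case by (simp add: mI_def qm_def pm_def)
next
  case (Suc n)
  have "[1..<Suc (Suc n)] = [1..<Suc n] @ [Suc n]" by simp
  then have "pl (map (\<lambda>i. int (a i)) [1..<Suc (Suc n)]) =
     mmul (pl (map (\<lambda>i. int (a i)) [1..<Suc n])) (mF (int (a (Suc n))))"
    by (simp add: pl_append mI_def mF_def)
  also have "\<dots> = M2 (cfq a (Suc n)) (qm a (Suc n)) (cfp a (Suc n)) (pm a (Suc n))"
    using Suc by (simp add: mF_def cfq_Suc cfp_Suc qm_def pm_def algebra_simps)
  finally show ?case .
qed

lemma cf_det: "int (cfq a n) * int (pm a n) - int (qm a n) * int (cfp a n) = (-1) ^ n"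
proof -
  have "mdet (pl (map (\<lambda>i. int (a i)) [1..<Suc n])) = (-1) ^ n"
    by (simp only: pl_det length_map length_upt) simp
  then show ?thesis by (simp only: pl_cf mdet.simps)
qed

lemma begins_map: "begins_with a W \<Longrightarrow> map a [1..<Suc (length W)] = W"
  unfolding begins_with_def by (intro nth_equalityI) (simp_all add: nth_upt del: upt_Suc)



locale cfa =
  fixes a :: "nat \<Rightarrow> nat"
  assumes apos: "\<And>n. n \<ge> 1 \<Longrightarrow> a n > 0"
begin

declare cfq.simps(3)[simp del] cfp.simps(3)[simp del]

lemma q_mono_Suc: "cfq a n \<le> cfq a (Suc n)"
proof -
  have "a (Suc n) \<ge> 1" using apos[of "Suc n"] by simp
  then have "cfq a n \<le> a (Suc n) * cfq a n" by (metis mult_le_mono1 mult_1)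
  then show ?thesis unfolding cfq_Suc by (rule trans_le_add1)
qed

lemma q_mono: "m \<le> n \<Longrightarrow> cfq a m \<le> cfq a n"
  by (induction n rule: dec_induct) (auto intro: order.trans q_mono_Suc)

lemma q_pos: "cfq a n \<ge> 1"
  using q_mono[of 0 n] by simp

lemma qm_le: "qm a n \<le> cfq a n"
  by (cases n) (simp_all add: qm_def q_mono_Suc)

lemma p_le_aux: "cfp a n \<le> cfq a n \<and> cfp a (Suc n) \<le> cfq a (Suc n)"
proof (induction n)
  case 0
  then show ?case using apos[of 1] by simp
next
  case (Suc n)
  have "cfp a (Suc (Suc n)) = a (Suc (Suc n)) * cfp a (Suc n) + cfp a n" by (simp add: cfp.simps(3))
  also have "\<dots> \<le> a (Suc (Suc n)) * cfq a (Suc n) + cfq a n"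
    using Suc by (intro add_mono mult_left_mono) auto
  also have "\<dots> = cfq a (Suc (Suc n))" by (simp add: cfq.simps(3))
  finally show ?case using Suc by simp
qed

lemma p_le: "cfp a n \<le> cfq a n" using p_le_aux by blast

lemma pm_le: "pm a n \<le> cfq a n"
  by (cases n) (auto simp: pm_def intro: order.trans[OF p_le q_mono_Suc])

lemma q_two: "2 * cfq a n \<le> cfq a (Suc (Suc n))"
proof -
  have "a (Suc (Suc n)) \<ge> 1" using apos[of "Suc (Suc n)"] by simp
  then have "cfq a (Suc n) \<le> a (Suc (Suc n)) * cfq a (Suc n)" by (metis mult_le_mono1 mult_1)
  then show ?thesis using q_mono_Suc[of n] unfolding cfq.simps(3) by linarith
qed

lemma q_pow: "2 ^ (n div 2) \<le> cfq a n"
proof (induction n rule: less_induct)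
  case (less n)
  show ?case
  proof (cases "n < 2")
    case True
    then show ?thesis using q_pos[of n] by (cases n) auto
  next
    case False
    then obtain k where k: "n = Suc (Suc k)" by (metis add_2_eq_Suc le_add_diff_inverse not_less)
    have "2 ^ (n div 2) = 2 * 2 ^ (k div 2)" using k by simp
    also have "\<dots> \<le> 2 * cfq a k" using less[of k] k by simp
    also have "\<dots> \<le> cfq a n" using q_two[of k] k by simp
    finally show ?thesis .
  qed
qed

lemma det_Suc: "int (cfq a (Suc n)) * int (cfp a n) - int (cfq a n) * int (cfp a (Suc n)) = (-1) ^ Suc n"
  using cf_det[of a "Suc n"] by (simp add: qm_def pm_def)

lemma inv_mono: "0 < x \<Longrightarrow> x \<le> y \<Longrightarrow> 1/y \<le> 1/(x::real)" by (simp add: frac_le)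

lemma rq_mono: "m \<le> n \<Longrightarrow> real (cfq a m) \<le> real (cfq a n)" using q_mono by simp

definition xc :: "nat \<Rightarrow> real" where "xc n = real (cfp a n) / real (cfq a n)"

lemma xc_diff: "xc (Suc n) - xc n = (-1) ^ n / (real (cfq a n) * real (cfq a (Suc n)))"
proof -
  have q0: "real (cfq a n) > 0" "real (cfq a (Suc n)) > 0" using q_pos[of n] q_pos[of "Suc n"] by auto
  have d: "real (cfq a (Suc n)) * real (cfp a n) - real (cfq a n) * real (cfp a (Suc n)) = (-1) ^ Suc n"
    using arg_cong[OF det_Suc, of real_of_int] by simp
  show ?thesis using q0 d unfolding xc_def by (simp add: field_simps)
qed

lemma xc_even: "xc (2*k) \<le> xc (2*(Suc k))"
proof -
  have q0: "real (cfq a n) > 0" for n using q_pos[of n] by auto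
  have "xc (2*Suc k) - xc (2*k) = (xc (Suc (Suc (2*k))) - xc (Suc (2*k))) + (xc (Suc (2*k)) - xc (2*k))"
    by simp
  also have "\<dots> = 1 / (real (cfq a (2*k)) * real (cfq a (Suc (2*k)))) - 1 / (real (cfq a (Suc (2*k))) * real (cfq a (Suc (Suc (2*k)))))"
    by (simp only: xc_diff) simp
  also have "\<dots> \<ge> 0"
  proof -
    have "real (cfq a (2*k)) * real (cfq a (Suc (2*k))) \<le> real (cfq a (Suc (2*k))) * real (cfq a (Suc (Suc (2*k))))"
      using rq_mono[of "2*k" "Suc (Suc (2*k))"] q0[of "Suc (2*k)"] by (simp add: mult.commute)
    then show ?thesis using inv_mono q0 by (simp add: mult_pos_pos)
  qed
  finally show ?thesis by simp
qed

lemma xc_odd: "xc (Suc (2*Suc k)) \<le> xc (Suc (2*k))"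
proof -
  have q0: "real (cfq a n) > 0" for n using q_pos[of n] by auto
  have "xc (Suc (2*Suc k)) - xc (Suc (2*k)) = (xc (Suc (Suc (Suc (2*k)))) - xc (Suc (Suc (2*k)))) + (xc (Suc (Suc (2*k))) - xc (Suc (2*k)))"
    by simp
  also have "\<dots> = 1 / (real (cfq a (Suc (Suc (2*k)))) * real (cfq a (Suc (Suc (Suc (2*k)))))) - 1 / (real (cfq a (Suc (2*k))) * real (cfq a (Suc (Suc (2*k)))))"
    by (simp only: xc_diff) simp
  also have "\<dots> \<le> 0"
  proof -
    have "real (cfq a (Suc (2*k))) * real (cfq a (Suc (Suc (2*k)))) \<le> real (cfq a (Suc (Suc (2*k)))) * real (cfq a (Suc (Suc (Suc (2*k)))))"
      using rq_mono[of "Suc (2*k)" "Suc (Suc (Suc (2*k)))"] q0[of "Suc (Suc (2*k))"] by (simp add: mult.commute)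
    then show ?thesis using inv_mono q0 by (simp add: mult_pos_pos)
  qed
  finally show ?thesis by simp
qed

lemma approx:
  assumes lim: "xc \<longlonglongrightarrow> \<alpha>"
  shows "\<bar>real (cfq a n) * \<alpha> - real (cfp a n)\<bar> \<le> 1 / real (cfq a (Suc n))"
proof -
  have q0: "real (cfq a n) > 0" for n using q_pos[of n] by auto
  have E: "xc (2*k) \<le> \<alpha>" for k
  proof (rule incseq_le[of "\<lambda>k. xc (2*k)"])
    show "incseq (\<lambda>k. xc (2*k))" by (rule incseq_SucI) (rule xc_even)
    show "(\<lambda>k. xc (2*k)) \<longlonglongrightarrow> \<alpha>"
      using LIMSEQ_subseq_LIMSEQ[OF lim, of "\<lambda>k. 2*k"] by (simp add: strict_mono_def o_def)
  qed
  have O: "\<alpha> \<le> xc (Suc (2*k))" for k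
  proof (rule decseq_ge[of "\<lambda>k. xc (Suc (2*k))"])
    show "decseq (\<lambda>k. xc (Suc (2*k)))" by (rule decseq_SucI) (rule xc_odd)
    show "(\<lambda>k. xc (Suc (2*k))) \<longlonglongrightarrow> \<alpha>"
      using LIMSEQ_subseq_LIMSEQ[OF lim, of "\<lambda>k. Suc (2*k)"] by (simp add: strict_mono_def o_def)
  qed
  have B: "\<bar>\<alpha> - xc n\<bar> \<le> \<bar>xc (Suc n) - xc n\<bar>"
  proof (cases "even n")
    case True
    then obtain k where "n = 2*k" by auto
    then show ?thesis using E[of k] O[of k] by simp
  next
    case False
    then obtain k where "n = Suc (2*k)" by (metis oddE Suc_eq_plus1)
    then show ?thesis using E[of "Suc k"] O[of k] by simp
  qed
  have "\<bar>xc (Suc n) - xc n\<bar> = 1 / (real (cfq a n) * real (cfq a (Suc n)))"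
    by (simp add: xc_diff abs_mult)
  with B have "\<bar>\<alpha> - xc n\<bar> \<le> 1 / (real (cfq a n) * real (cfq a (Suc n)))" by simp
  then have "real (cfq a n) * \<bar>\<alpha> - xc n\<bar> \<le> real (cfq a n) * (1 / (real (cfq a n) * real (cfq a (Suc n))))"
    using q0[of n] by (intro mult_left_mono) auto
  also have "\<dots> = 1 / real (cfq a (Suc n))" using q0[of n] by simp
  finally have "real (cfq a n) * \<bar>\<alpha> - xc n\<bar> \<le> 1 / real (cfq a (Suc n))" .
  moreover have "real (cfq a n) * \<bar>\<alpha> - xc n\<bar> = \<bar>real (cfq a n) * \<alpha> - real (cfp a n)\<bar>"
    using q0[of n] unfolding xc_def by (simp add: abs_mult[symmetric] field_simps)
  ultimately show ?thesis by simp
qed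

end


lemma begins_prefix: "begins_with a (V @ W) \<Longrightarrow> begins_with a V"
  unfolding begins_with_def by (auto simp: nth_append)

lemma pl_map_cf_aux: "map a [1..<Suc n] = W \<Longrightarrow> pl (map int W) =
   M2 (cfq a n) (qm a n) (cfp a n) (pm a n)"
proof -
  assume h: "map a [1..<Suc n] = W"
  have "pl (map int W) = pl (map int (map a [1..<Suc n]))" by (simp only: h)
  also have "\<dots> = pl (map (\<lambda>i. int (a i)) [1..<Suc n])" by (simp only: map_map o_def)
  finally show ?thesis by (simp only: pl_cf)
qed

lemma pl_map_cf: "begins_with a W \<Longrightarrow> pl (map int W) =
   M2 (cfq a (length W)) (qm a (length W)) (cfp a (length W)) (pm a (length W))"
  by (rule pl_map_cf_aux) (rule begins_map)

lemma sym_entries: "mtr A = A \<Longrightarrow> A = M2 x y z w \<Longrightarrow> y = z" by (metis m2.inject mtr.simps)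

lemma sym_A:
  assumes "mmul Mv (mmul P (mtr P)) = MN"
  shows "mtr (mmul MN (mtr Mv)) = mmul MN (mtr Mv)"
proof -
  define S where "S = mmul P (mtr P)"
  have S: "mtr S = S" unfolding S_def by (simp add: mtr_mul)
  have "mtr (mmul MN (mtr Mv)) = mmul Mv (mtr MN)" by (simp add: mtr_mul)
  also have "mtr MN = mtr (mmul Mv S)" using assms S_def by simp
  also have "\<dots> = mmul S (mtr Mv)" by (simp add: mtr_mul S)
  also have "mmul Mv (mmul S (mtr Mv)) = mmul MN (mtr Mv)" using assms S_def by (metis mmul_assoc)
  finally show ?thesis .
qed

lemma lin_bound:
  fixes x y e s t w :: real
  assumes "\<bar>x\<bar> \<le> e" "\<bar>y\<bar> \<le> e" "0 \<le> s" "0 \<le> t" "s \<le> w" "t \<le> w"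
  shows "\<bar>s*x + t*y\<bar> \<le> 2*w*e"
proof -
  have "\<bar>s*x + t*y\<bar> \<le> s*\<bar>x\<bar> + t*\<bar>y\<bar>"
    using assms abs_triangle_ineq[of "s*x" "t*y"] by (simp add: abs_mult)
  also have "\<dots> \<le> w*e + w*e"
    using assms by (intro add_mono mult_mono) auto
  finally show ?thesis by (simp add: ac_simps)
qed

lemma key_arith:
  fixes qN qmN pN pmN qn qmn pn pmn :: nat and \<alpha> :: real
  assumes b: "qmN \<le> qN" "qmn \<le> qn" "pn \<le> qn" "pmn \<le> qn" "1 \<le> qn" "1 \<le> qN"
    and e1: "\<bar>real qN * \<alpha> - real pN\<bar> \<le> 1 / real qN"
    and e2: "\<bar>real qmN * \<alpha> - real pmN\<bar> \<le> 1 / real qN"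
    and symm: "int qN * int pn + int qmN * int pmn = int pN * int qn + int pmN * int qmn"
  shows "\<exists>(A11::int) (A12::int) (A22::int). real qN \<le> A11 \<and> A11 \<le> 2 * real qN * real qn
     \<and> \<bar>A12\<bar> \<le> 2 * real qN * real qn
     \<and> \<bar>\<alpha> * A11 - A12\<bar> \<le> 2 * real qn / real qN
     \<and> \<bar>\<alpha> * A12 - A22\<bar> \<le> 2 * real qn / real qN"
proof -
  define A11 A12 A22 where "A11 = int qN * int qn + int qmN * int qmn"
    and "A12 = int qN * int pn + int qmN * int pmn" and "A22 = int pN * int pn + int pmN * int pmn"
  have rb: "real qmN \<le> real qN" "real qmn \<le> real qn" "real pn \<le> real qn" "real pmn \<le> real qn" "1 \<le> real qn" "1 \<le> real qN"
    using b by simp_all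
  have r1: "real qN \<le> A11"
  proof -
    have "real qN * 1 \<le> real qN * real qn" using rb(5) by (rule mult_left_mono) simp
    moreover have "0 \<le> real qmN * real qmn" by simp
    moreover have "real_of_int A11 = real qN * real qn + real qmN * real qmn" unfolding A11_def by simp
    ultimately show ?thesis by linarith
  qed
  have r2: "A11 \<le> 2 * real qN * real qn"
  proof -
    have "real qmN * real qmn \<le> real qN * real qn" using rb(1,2) by (rule mult_mono) simp_all
    then show ?thesis unfolding A11_def by simp
  qed
  have r3: "\<bar>real_of_int A12\<bar> \<le> 2 * real qN * real qn"
  proof -
    have "real qmN * real pmn \<le> real qN * real qn" using rb(1,4) by (rule mult_mono) simp_all
    moreover have "real qN * real pn \<le> real qN * real qn" using rb(3) by (rule mult_left_mono) simp
    ultimately show ?thesis unfolding A12_def by simp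
  qed
  have A12': "A12 = int pN * int qn + int pmN * int qmn" using symm A12_def by simp
  have r4: "\<bar>\<alpha> * A11 - A12\<bar> \<le> 2 * real qn / real qN"
  proof -
    have eq: "\<alpha> * A11 - A12 = real qn * (real qN * \<alpha> - real pN) + real qmn * (real qmN * \<alpha> - real pmN)"
      unfolding A11_def A12' by (simp add: algebra_simps)
    have "\<bar>real qn * (real qN * \<alpha> - real pN) + real qmn * (real qmN * \<alpha> - real pmN)\<bar>
       \<le> 2 * real qn * (1 / real qN)"
      by (rule lin_bound[OF e1 e2]) (use rb in simp_all)
    then show ?thesis using eq by simp
  qed
  have r5: "\<bar>\<alpha> * A12 - A22\<bar> \<le> 2 * real qn / real qN"
  proof -
    have eq: "\<alpha> * A12 - A22 = real pn * (real qN * \<alpha> - real pN) + real pmn * (real qmN * \<alpha> - real pmN)"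
      unfolding A22_def A12_def by (simp add: algebra_simps)
    have "\<bar>real pn * (real qN * \<alpha> - real pN) + real pmn * (real qmN * \<alpha> - real pmN)\<bar>
       \<le> 2 * real qn * (1 / real qN)"
      by (rule lin_bound[OF e1 e2]) (use rb in simp_all)
    then show ?thesis using eq by simp
  qed
  show ?thesis using r1 r2 r3 r4 r5 by blast
qed

context cfa begin

lemma approx_m:
  assumes lim: "xc \<longlonglongrightarrow> \<alpha>"
  shows "\<bar>real (qm a N) * \<alpha> - real (pm a N)\<bar> \<le> 1 / real (cfq a N)"
proof (cases N)
  case 0 then show ?thesis by (simp add: qm_def pm_def)
next
  case (Suc k) then show ?thesis using approx[OF lim, of k] by (simp add: qm_def pm_def)
qed

lemma approx2:
  assumes lim: "xc \<longlonglongrightarrow> \<alpha>"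
  shows "\<bar>real (cfq a N) * \<alpha> - real (cfp a N)\<bar> \<le> 1 / real (cfq a N)"
proof -
  have "1 / real (cfq a (Suc N)) \<le> 1 / real (cfq a N)"
    using q_pos[of N] rq_mono[of N "Suc N"] by (intro inv_mono) auto
  then show ?thesis using approx[OF lim, of N] by linarith
qed

lemma key:
  assumes lim: "xc \<longlonglongrightarrow> \<alpha>"
    and bw: "begins_with a (V @ U @ rev U)"
    and n: "n = length V" and NN: "N = length V + 2 * length U"
  shows "\<exists>(A11::int) (A12::int) (A22::int). real (cfq a N) \<le> A11 \<and> A11 \<le> 2 * real (cfq a N) * real (cfq a n)
     \<and> \<bar>A12\<bar> \<le> 2 * real (cfq a N) * real (cfq a n)
     \<and> \<bar>\<alpha> * A11 - A12\<bar> \<le> 2 * real (cfq a n) / real (cfq a N)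
     \<and> \<bar>\<alpha> * A12 - A22\<bar> \<le> 2 * real (cfq a n) / real (cfq a N)"
proof -
  define qN qmN pN pmN where "qN = cfq a N" "qmN = qm a N" "pN = cfp a N" "pmN = pm a N"
  define qn qmn pn pmn where "qn = cfq a n" "qmn = qm a n" "pn = cfp a n" "pmn = pm a n"
  have MN: "pl (map int (V @ U @ rev U)) = M2 qN qmN pN pmN"
  proof -
    have "length (V @ U @ rev U) = N" using NN by simp
    then show ?thesis using pl_map_cf[OF bw] by (simp only: qN_qmN_pN_pmN_def)
  qed
  have Mv: "pl (map int V) = M2 qn qmn pn pmn"
    using pl_map_cf[OF begins_prefix[OF bw]] n by (simp add: qn_qmn_pn_pmn_def)
  have "mmul (pl (map int V)) (mmul (pl (map int U)) (mtr (pl (map int U)))) = pl (map int (V @ U @ rev U))"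
  proof -
    have "map int (V @ U @ rev U) = map int V @ map int U @ rev (map int U)" by (simp add: rev_map)
    then show ?thesis by (simp only: pl_append pl_rev)
  qed
  then have X: "mmul (M2 qn qmn pn pmn) (mmul (pl (map int U)) (mtr (pl (map int U)))) = M2 qN qmN pN pmN"
    unfolding Mv MN .
  have "mtr (mmul (M2 qN qmN pN pmN) (mtr (M2 qn qmn pn pmn))) = mmul (M2 qN qmN pN pmN) (mtr (M2 qn qmn pn pmn))"
    by (rule sym_A[OF X])
  note H = this
  have E: "mmul (M2 qN qmN pN pmN) (mtr (M2 qn qmn pn pmn)) = M2 (int qN * int qn + int qmN * int qmn)
     (int qN * int pn + int qmN * int pmn) (int pN * int qn + int pmN * int qmn) (int pN * int pn + int pmN * int pmn)"
    by simp
  have symm: "int qN * int pn + int qmN * int pmn = int pN * int qn + int pmN * int qmn"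
    by (rule sym_entries[OF H E])
  have b: "qmN \<le> qN" "qmn \<le> qn" "pn \<le> qn" "pmn \<le> qn" "1 \<le> qn" "1 \<le> qN"
    unfolding qN_qmN_pN_pmN_def qn_qmn_pn_pmn_def by (rule qm_le qm_le p_le pm_le q_pos q_pos)+
  have e1: "\<bar>real qN * \<alpha> - real pN\<bar> \<le> 1 / real qN" unfolding qN_qmN_pN_pmN_def by (rule approx2[OF lim])
  have e2: "\<bar>real qmN * \<alpha> - real pmN\<bar> \<le> 1 / real qN" unfolding qN_qmN_pN_pmN_def by (rule approx_m[OF lim])
  show ?thesis using key_arith[OF b e1 e2 symm] unfolding qN_qmN_pN_pmN_def qn_qmn_pn_pmn_def .
qed

end


lemma dnint_nonneg: "dnint y \<ge> 0"
  unfolding dnint_def using frac_lt_1[of y] frac_ge_0[of y] by simp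

lemma dnint_le: "dnint y \<le> \<bar>y - of_int z\<bar>"
proof (cases "z \<le> \<lfloor>y\<rfloor>")
  case True
  then have "frac y \<le> \<bar>y - of_int z\<bar>" unfolding frac_def
    using of_int_floor_le[of y] by (simp add: abs_if)
  then show ?thesis unfolding dnint_def by simp
next
  case False
  then have "1 - frac y \<le> \<bar>y - of_int z\<bar>" unfolding frac_def
    using floor_correct[of y] by (simp add: abs_if)
  then show ?thesis unfolding dnint_def by simp
qed

lemma dnint_nat_abs: "dnint (real (nat \<bar>Q\<bar>) * y) \<le> \<bar>of_int Q * y - of_int Z\<bar>"
proof (cases "Q \<ge> 0")
  case True
  then show ?thesis using dnint_le[of "of_int Q * y" Z] by simp
next
  case False
  then have "real (nat \<bar>Q\<bar>) * y = - (of_int Q * y)" by simp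
  then show ?thesis using dnint_le[of "- (of_int Q * y)" "- Z"] by (simp add: abs_minus_commute)
qed

lemma homog:
  fixes \<alpha> \<beta> A11 A12 A22 E T :: real and a' b' c' d' :: int
  assumes "c' * \<alpha> + d' \<noteq> 0" "\<beta> = (a' * \<alpha> + b') / (c' * \<alpha> + d')"
    and "\<bar>\<alpha> * A11 - A12\<bar> \<le> E" "\<bar>\<alpha> * A12 - A22\<bar> \<le> E"
  shows "\<bar>(d' * A11 + c' * A12) * \<alpha> - (d' * A12 + c' * A22)\<bar> \<le> (\<bar>c'\<bar> + \<bar>d'\<bar>) * E"
    and "\<bar>(d' * A11 + c' * A12) * \<beta> - (b' * A11 + a' * A12)\<bar> \<le> (\<bar>a'\<bar> + \<bar>c'\<bar> * \<bar>\<beta>\<bar>) * E"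
    and "\<bar>d' * A11 + c' * A12\<bar> \<ge> \<bar>A11\<bar> * \<bar>c' * \<alpha> + d'\<bar> - \<bar>c'\<bar> * E"
proof -
  define e where "e = \<alpha> * A11 - A12"
  define f where "f = \<alpha> * A12 - A22"
  have "(d' * A11 + c' * A12) * \<alpha> - (d' * A12 + c' * A22) = d' * e + c' * f"
    unfolding e_def f_def by (simp add: algebra_simps)
  also have "\<bar>\<dots>\<bar> \<le> \<bar>d'\<bar> * \<bar>e\<bar> + \<bar>c'\<bar> * \<bar>f\<bar>" by (metis abs_mult abs_triangle_ineq of_int_abs)
  also have "\<dots> \<le> \<bar>d'\<bar> * E + \<bar>c'\<bar> * E"
    using assms(3,4) unfolding e_def f_def by (intro add_mono mult_left_mono) auto
  finally show "\<bar>(d' * A11 + c' * A12) * \<alpha> - (d' * A12 + c' * A22)\<bar> \<le> (\<bar>c'\<bar> + \<bar>d'\<bar>) * E"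
    by (simp add: algebra_simps)
  have Q: "d' * A11 + c' * A12 = A11 * (c' * \<alpha> + d') - c' * e" unfolding e_def by (simp add: algebra_simps)
  have hb: "\<beta> * (c' * \<alpha> + d') = a' * \<alpha> + b'" using assms(1,2) by simp
  have "(d' * A11 + c' * A12) * \<beta> = A11 * (\<beta> * (c' * \<alpha> + d')) - c' * e * \<beta>"
    unfolding Q by (simp add: algebra_simps)
  then have "(d' * A11 + c' * A12) * \<beta> = A11 * (a' * \<alpha> + b') - c' * e * \<beta>"
    unfolding hb .
  then have "(d' * A11 + c' * A12) * \<beta> - (b' * A11 + a' * A12) = e * (a' - c' * \<beta>)"
    unfolding e_def by (simp add: algebra_simps)
  also have "\<bar>\<dots>\<bar> \<le> \<bar>e\<bar> * (\<bar>a'\<bar> + \<bar>c'\<bar> * \<bar>\<beta>\<bar>)"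
    unfolding abs_mult by (intro mult_left_mono) (auto intro: order.trans[OF abs_triangle_ineq4] simp: abs_mult)
  also have "\<dots> \<le> (\<bar>a'\<bar> + \<bar>c'\<bar> * \<bar>\<beta>\<bar>) * E"
  proof -
    have "\<bar>e\<bar> * (\<bar>a'\<bar> + \<bar>c'\<bar> * \<bar>\<beta>\<bar>) \<le> E * (\<bar>a'\<bar> + \<bar>c'\<bar> * \<bar>\<beta>\<bar>)"
      by (rule mult_right_mono) (use assms(3) e_def in auto)
    then show ?thesis by (simp only: mult.commute)
  qed
  finally show "\<bar>(d' * A11 + c' * A12) * \<beta> - (b' * A11 + a' * A12)\<bar> \<le> (\<bar>a'\<bar> + \<bar>c'\<bar> * \<bar>\<beta>\<bar>) * E" .
  have "\<bar>A11 * (c' * \<alpha> + d')\<bar> - \<bar>c' * e\<bar> \<le> \<bar>A11 * (c' * \<alpha> + d') - c' * e\<bar>"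
    by (rule abs_triangle_ineq2)
  moreover have "\<bar>c' * e\<bar> \<le> \<bar>c'\<bar> * E" using assms(3) unfolding e_def abs_mult by (simp add: mult_left_mono)
  ultimately show "\<bar>d' * A11 + c' * A12\<bar> \<ge> \<bar>A11\<bar> * \<bar>c' * \<alpha> + d'\<bar> - \<bar>c'\<bar> * E"
    unfolding Q by (simp add: abs_mult)
qed



lemma powr_inv_pow: "0 < (y::real) \<Longrightarrow> 0 < l \<Longrightarrow> (y powr (1 / real l)) powr (real l) = y"
  by (simp add: powr_powr)

context cfa begin

lemma m_ge:
  assumes "liminf (\<lambda>l. ereal (real (cfq a l) powr (1 / real l))) = ereal m"
  shows "2 powr (1/4) \<le> m"
proof -
  have "eventually (\<lambda>l. ereal (2 powr (1/4)) \<le> ereal (real (cfq a l) powr (1 / real l))) sequentially"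
    unfolding eventually_sequentially
  proof (intro exI allI impI)
    fix l :: nat assume l: "2 \<le> l"
    have "4 * (l div 2) \<ge> l" using l by presburger
    then have "real l / 4 \<le> real (l div 2)" by linarith
    then have "2 powr (real l / 4) \<le> 2 powr real (l div 2)" by (intro powr_mono) auto
    also have "\<dots> = 2 ^ (l div 2)" by (simp add: powr_realpow)
    also have "\<dots> \<le> real (cfq a l)" using q_pow[of l] by (metis numeral_power_le_of_nat_cancel_iff)
    finally have h: "2 powr (real l / 4) \<le> real (cfq a l)" .
    have "2 powr (1/4) = (2 powr (real l / 4)) powr (1 / real l)" using l by (simp add: powr_powr)
    also have "\<dots> \<le> real (cfq a l) powr (1 / real l)" using h by (intro powr_mono2) auto
    finally show "ereal (2 powr (1/4)) \<le> ereal (real (cfq a l) powr (1 / real l))" by simp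
  qed
  then have "ereal (2 powr (1/4)) \<le> ereal m" using assms Liminf_bounded by metis
  then show ?thesis by simp
qed

lemma upper_growth:
  assumes "limsup (\<lambda>l. ereal (real (cfq a l) powr (1 / real l))) = ereal M" and "M < Mp" and "1 \<le> Mp"
  shows "\<exists>B\<ge>1. \<forall>l. real (cfq a l) \<le> B * Mp ^ l"
proof -
  have "eventually (\<lambda>l. ereal (real (cfq a l) powr (1 / real l)) < ereal Mp) sequentially"
    using assms(1,2) by (intro Limsup_lessD) simp
  then obtain L where L: "\<And>l. l \<ge> L \<Longrightarrow> real (cfq a l) powr (1 / real l) < Mp"
    unfolding eventually_sequentially by auto
  define B where "B = 1 + (\<Sum>l<Suc L. real (cfq a l))"
  have B1: "B \<ge> 1" unfolding B_def by (simp add: sum_nonneg)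
  have "real (cfq a l) \<le> B * Mp ^ l" for l
  proof (cases "l \<le> L")
    case True
    have "real (cfq a l) \<le> (\<Sum>l<Suc L. real (cfq a l))"
      using True by (intro member_le_sum) auto
    also have "\<dots> \<le> B" unfolding B_def by simp
    also have "B \<le> B * Mp ^ l" using B1 assms(3) by (simp add: one_le_power)
    finally show ?thesis .
  next
    case False
    then have l0: "0 < l" "L \<le> l" by auto
    have q0: "0 < real (cfq a l)" using q_pos[of l] by simp
    have "real (cfq a l) = (real (cfq a l) powr (1 / real l)) powr (real l)"
      using powr_inv_pow[OF q0, of l] l0 by simp
    also have "\<dots> \<le> Mp powr (real l)" using L[OF l0(2)] by (intro powr_mono2) auto
    also have "\<dots> = Mp ^ l" using assms(3) by (simp add: powr_realpow)
    also have "\<dots> \<le> B * Mp ^ l" using B1 assms(3) by (simp add: one_le_power)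
    finally show ?thesis .
  qed
  then show ?thesis using B1 by blast
qed

lemma lower_growth:
  assumes "liminf (\<lambda>l. ereal (real (cfq a l) powr (1 / real l))) = ereal m" and "mp < m" and "0 < mp"
  shows "\<exists>L. \<forall>l\<ge>L. mp ^ l \<le> real (cfq a l)"
proof -
  have "eventually (\<lambda>l. ereal (real (cfq a l) powr (1 / real l)) > ereal mp) sequentially"
    using assms(1,2) by (intro less_LiminfD) simp
  then obtain L where L: "\<And>l. l \<ge> L \<Longrightarrow> real (cfq a l) powr (1 / real l) > mp"
    unfolding eventually_sequentially by auto
  have "mp ^ l \<le> real (cfq a l)" if l: "l \<ge> Suc L" for l
  proof -
    have l0: "0 < l" "L \<le> l" using l by auto
    have q0: "0 < real (cfq a l)" using q_pos[of l] by simp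
    have "mp ^ l = mp powr (real l)" using assms(3) by (simp add: powr_realpow)
    also have "\<dots> \<le> (real (cfq a l) powr (1 / real l)) powr (real l)"
      using L[OF l0(2)] assms(3) by (intro powr_mono2) auto
    also have "\<dots> = real (cfq a l)" using powr_inv_pow[OF q0, of l] l0 by simp
    finally show ?thesis .
  qed
  then show ?thesis by blast
qed

end

lemma choose_rates:
  fixes M m x :: real
  assumes m1: "1 < m" and mM: "m \<le> M" and xb: "x > 3 / 2 * (ln M / ln m) - 1 / 2"
  shows "\<exists>Mp mp. M < Mp \<and> 1 < mp \<and> mp < m \<and> 3 * ln Mp / ln mp - 1 < 2 * x"
proof -
  have lim: "((\<lambda>e. 3 * ln (M + e) / ln (m - e) - 1) \<longlongrightarrow> 3 * ln (M + 0) / ln (m - 0) - 1) (at_right 0)"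
    using m1 mM by (intro tendsto_intros) auto
  have "3 * ln (M + 0) / ln (m - 0) - 1 < 2 * x" using xb by simp
  then have ev1: "eventually (\<lambda>e. 3 * ln (M + e) / ln (m - e) - 1 < 2 * x) (at_right 0)"
    using lim order_tendstoD(2) by blast
  have ev2: "eventually (\<lambda>e. e \<in> {0<..<m - 1}) (at_right (0::real))"
    using m1 by (intro eventually_at_right_real) simp
  have "eventually (\<lambda>e. 3 * ln (M + e) / ln (m - e) - 1 < 2 * x \<and> e \<in> {0<..<m - 1}) (at_right (0::real))"
    using ev1 ev2 by (rule eventually_conj)
  then obtain e where "3 * ln (M + e) / ln (m - e) - 1 < 2 * x" "e \<in> {0<..<m - 1}"
    using eventually_happens[of _ "at_right (0::real)"] by (auto simp: trivial_limit_at_right_real)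
  then show ?thesis by (intro exI[of _ "M + e"] exI[of _ "m - e"]) auto
qed

lemma exp_bound:
  fixes x Mp mp :: real and n u :: nat
  assumes x0: "0 < x" and mp1: "1 < mp" and mpM: "mp \<le> Mp"
    and xr: "3 * ln Mp / ln mp - 1 < 2 * x" and nu: "x * real n \<le> real u"
  shows "Mp ^ (3 * n) / mp ^ (n + 2 * u) \<le> exp (- (2 * ln mp - (3 * ln Mp - ln mp) / x) * real u)"
proof -
  define L1 L2 where "L1 = ln Mp" "L2 = ln mp"
  have L2: "0 < L2" using mp1 unfolding L1_L2_def by simp
  have L12: "L2 \<le> L1" using mpM mp1 unfolding L1_L2_def by simp
  have n_le: "real n \<le> real u / x" using nu x0 by (simp add: field_simps)
  have "real n * (3 * L1 - L2) \<le> (real u / x) * (3 * L1 - L2)"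
    using n_le L12 L2 by (intro mult_right_mono) auto
  moreover have "- (2 * L2 - (3 * L1 - L2) / x) * real u = (real u / x) * (3*L1 - L2) - 2*L2*real u"
    using x0 by (simp add: field_simps)
  moreover have "real (3 * n) * L1 - real (n + 2 * u) * L2 = real n * (3*L1-L2) - 2*L2*real u"
    by (simp add: algebra_simps)
  ultimately have ex: "real (3 * n) * L1 - real (n + 2 * u) * L2 \<le> - (2 * L2 - (3 * L1 - L2) / x) * real u"
    by linarith
  have pw: "y ^ k = exp (real k * ln y)" if "0 < y" for y :: real and k :: nat
    by (subst exp_of_nat_mult) (use that in simp)
  have "Mp ^ (3 * n) = exp (real (3 * n) * L1)" using mp1 mpM unfolding L1_L2_def
    by (intro pw) simp
  moreover have "mp ^ (n + 2 * u) = exp (real (n + 2 * u) * L2)" using mp1 unfolding L1_L2_def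
    by (intro pw) simp
  ultimately have "Mp ^ (3 * n) / mp ^ (n + 2 * u) = exp (real (3 * n) * L1 - real (n + 2 * u) * L2)"
    by (simp add: exp_diff)
  also have "\<dots> \<le> exp (- (2 * L2 - (3 * L1 - L2) / x) * real u)" using ex by simp
  finally show ?thesis unfolding L1_L2_def .
qed



lemma INF_zero:
  fixes f :: "nat \<Rightarrow> real"
  assumes "\<And>q. f q \<ge> 0" "\<And>\<delta>. \<delta> > 0 \<Longrightarrow> \<exists>q\<ge>1. f q \<le> \<delta>"
  shows "(INF q\<in>{1..}. f q) = 0"
proof (rule antisym)
  have bdd: "bdd_below (f ` {1..})" using assms(1) by (intro bdd_belowI[of _ 0]) auto
  show "(INF q\<in>{1..}. f q) \<le> 0"
  proof (rule field_le_epsilon)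
    fix \<delta> :: real assume "0 < \<delta>"
    then obtain q where "q \<ge> 1" "f q \<le> \<delta>" using assms(2) by blast
    then show "(INF q\<in>{1..}. f q) \<le> 0 + \<delta>" using bdd by (intro cINF_lower2[of f "{1..}" q]) auto
  qed
  show "0 \<le> (INF q\<in>{1..}. f q)" using assms(1) by (intro cINF_greatest) auto
qed

lemma U_len: assumes "\<forall>k\<ge>1. length (U (Suc k)) > length (U k)"
  shows "length (U (Suc k)) \<ge> k"
proof (induction k)
  case 0 then show ?case by simp
next
  case (Suc k)
  then show ?case using assms[rule_format, of "Suc k"] by simp
qed

lemma prod3_mono:
  fixes a b c x y z :: real
  assumes "0 \<le> a" "0 \<le> b" "0 \<le> c" "a \<le> x" "b \<le> y" "c \<le> z"
  shows "a * b * c \<le> x * y * z"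
  using assms by (intro mult_mono) (auto intro: mult_nonneg_nonneg order.trans)



lemma Kid: fixes P R qN qn :: real
  shows "qN \<noteq> 0 \<Longrightarrow> (P * (2*qN*qn)) * (P * (2*qn/qN)) * (R*(2*qn/qN)) = 8 * P^2 * R * (qn^3/qN)"
  by (simp add: field_simps power2_eq_square power3_eq_cube)

context cfa begin

lemma main_step:
  fixes \<alpha> \<beta> x B Mp mp \<delta> :: real and a' b' c' d' :: int and U V :: "nat \<Rightarrow> nat list"
  assumes lim: "xc \<longlonglongrightarrow> \<alpha>"
    and C0: "of_int c' * \<alpha> + of_int d' \<noteq> 0"
    and bdef: "\<beta> = (of_int a' * \<alpha> + of_int b') / (of_int c' * \<alpha> + of_int d')"
    and x0: "x > 0"
    and words: "\<forall>k\<ge>1. (\<forall>w\<in>set (V k @ U k @ rev (U k)). w > 0)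
                      \<and> begins_with a (V k @ U k @ rev (U k))
                      \<and> length (U (Suc k)) > length (U k)
                      \<and> real (length (U k)) \<ge> x * real (length (V k))"
    and B1: "B \<ge> 1" and B: "\<And>l. real (cfq a l) \<le> B * Mp ^ l"
    and L: "\<And>l. l \<ge> L \<Longrightarrow> mp ^ l \<le> real (cfq a l)"
    and mp1: "1 < mp" and mpM: "mp \<le> Mp" and xr: "3 * ln Mp / ln mp - 1 < 2 * x"
    and \<delta>: "\<delta> > 0"
  shows "\<exists>q\<ge>1. real q * dnint (real q * \<alpha>) * dnint (real q * \<beta>) \<le> \<delta>"
proof -
  define C where "C = \<bar>of_int c' * \<alpha> + of_int d'\<bar>"
  have Cpos: "C > 0" using C0 unfolding C_def by simp
  define K where "K = 8 * (\<bar>real_of_int c'\<bar> + \<bar>real_of_int d'\<bar>)^2 * (\<bar>real_of_int a'\<bar> + \<bar>real_of_int c'\<bar> * \<bar>\<beta>\<bar>)"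
  have K0: "K \<ge> 0" unfolding K_def by simp
  define cc where "cc = 2 * ln mp - (3 * ln Mp - ln mp) / x"
  have lnmp: "ln mp > 0" using mp1 by simp
  have cc0: "cc > 0"
  proof -
    have "3 * ln Mp / ln mp < 2 * x + 1" using xr by simp
    then have "3 * ln Mp < (2 * x + 1) * ln mp" using lnmp by (simp add: divide_less_eq)
    then have "(3 * ln Mp - ln mp) < 2 * ln mp * x" by (simp add: algebra_simps)
    then have "(3 * ln Mp - ln mp) / x < 2 * ln mp" using x0 by (simp add: divide_less_eq)
    then show ?thesis unfolding cc_def by simp
  qed
  define D where "D = K * B^3 + 1"
  have D0: "D > 0" unfolding D_def using K0 B1 by (simp add: add_nonneg_pos)
  define T where "T = max (max (real L) (2 * \<bar>real_of_int c'\<bar> / C)) (- ln (\<delta> / D) / cc)"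
  define k where "k = Suc (nat \<lceil>T\<rceil>)"
  have k1: "k \<ge> 1" unfolding k_def by simp
  have wk: "(\<forall>w\<in>set (V k @ U k @ rev (U k)). w > 0) \<and> begins_with a (V k @ U k @ rev (U k))
             \<and> real (length (U k)) \<ge> x * real (length (V k))"
    using words k1 by blast
  define n u where "n = length (V k)" and "u = length (U k)"
  define N where "N = n + 2 * u"
  have bw: "begins_with a (V k @ U k @ rev (U k))" using wk by blast
  have NN: "N = length (V k) + 2 * length (U k)" unfolding N_def n_def u_def ..
  have uT: "real u \<ge> T"
  proof -
    have "length (U (Suc (nat \<lceil>T\<rceil>))) \<ge> nat \<lceil>T\<rceil>"
      by (rule U_len) (use words in auto)
    then have "real u \<ge> real (nat \<lceil>T\<rceil>)" unfolding u_def k_def by simp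
    moreover have "real (nat \<lceil>T\<rceil>) \<ge> T" by linarith
    ultimately show ?thesis by linarith
  qed
  have uL: "u \<ge> L" using uT unfolding T_def by simp
  have xnu: "x * real n \<le> real u" using wk unfolding n_def u_def by simp
  obtain A11 A12 A22 :: int where
    r1: "real (cfq a N) \<le> A11" and r2: "A11 \<le> 2 * real (cfq a N) * real (cfq a n)"
    and r3: "\<bar>real_of_int A12\<bar> \<le> 2 * real (cfq a N) * real (cfq a n)"
    and r4: "\<bar>\<alpha> * A11 - A12\<bar> \<le> 2 * real (cfq a n) / real (cfq a N)"
    and r5: "\<bar>\<alpha> * A12 - A22\<bar> \<le> 2 * real (cfq a n) / real (cfq a N)"
    using key[OF lim bw n_def NN] by blast
  define qn qN where "qn = real (cfq a n)" and "qN = real (cfq a N)"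
  define E where "E = 2 * qn / qN"
  have qn1: "qn \<ge> 1" unfolding qn_def qN_def using q_pos[of n] by simp
  have qN1: "qN \<ge> 1" unfolding qn_def qN_def using q_pos[of N] by simp
  have qnN: "qn \<le> qN" unfolding qn_def qN_def N_def by (rule rq_mono) simp
  have E0: "E \<ge> 0" unfolding E_def using qn1 qN1 by simp
  have E2: "E \<le> 2" unfolding E_def using qnN qN1 by (simp add: divide_le_eq)
  have h1: "\<bar>(d' * real_of_int A11 + c' * real_of_int A12) * \<alpha> - (d' * real_of_int A12 + c' * real_of_int A22)\<bar> \<le> (\<bar>c'\<bar> + \<bar>d'\<bar>) * E"
    and h2: "\<bar>(d' * real_of_int A11 + c' * real_of_int A12) * \<beta> - (b' * real_of_int A11 + a' * real_of_int A12)\<bar> \<le> (\<bar>a'\<bar> + \<bar>c'\<bar> * \<bar>\<beta>\<bar>) * E"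
    and h3: "\<bar>d' * real_of_int A11 + c' * real_of_int A12\<bar> \<ge> \<bar>real_of_int A11\<bar> * \<bar>c' * \<alpha> + d'\<bar> - \<bar>c'\<bar> * E"
    using homog[OF C0 bdef, of "real_of_int A11" "real_of_int A12" E "real_of_int A22"] r4 r5
    unfolding E_def qn_def qN_def by auto
  define Qi Zi Ri where "Qi = d' * A11 + c' * A12" and "Zi = d' * A12 + c' * A22" and "Ri = b' * A11 + a' * A12"
  have Qc: "real_of_int Qi = d' * real_of_int A11 + c' * real_of_int A12" unfolding Qi_def Zi_def Ri_def by simp
  have Zc: "real_of_int Zi = d' * real_of_int A12 + c' * real_of_int A22" unfolding Qi_def Zi_def Ri_def by simp
  have Rc: "real_of_int Ri = b' * real_of_int A11 + a' * real_of_int A12" unfolding Qi_def Zi_def Ri_def by simp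
  have qNu: "qN > real u"
  proof -
    have "N div 2 \<ge> u" unfolding N_def by simp
    then have "(2::nat) ^ u \<le> 2 ^ (N div 2)" by (intro power_increasing) auto
    also have "\<dots> \<le> cfq a N" by (rule q_pow)
    finally have "u < cfq a N" using less_exp[of u] by linarith
    then show ?thesis unfolding qn_def qN_def by simp
  qed
  have "real u * C \<ge> 2 * \<bar>real_of_int c'\<bar>"
  proof -
    have "real u \<ge> 2 * \<bar>real_of_int c'\<bar> / C" using uT unfolding T_def by simp
    then show ?thesis using Cpos by (simp add: divide_le_eq)
  qed
  then have "qN * C > 2 * \<bar>real_of_int c'\<bar>" using qNu Cpos
    by (smt (verit) mult_strict_right_mono)
  moreover have "\<bar>real_of_int A11\<bar> * C \<ge> qN * C" using r1 Cpos unfolding qn_def qN_def by (intro mult_right_mono) auto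
  moreover have "\<bar>real_of_int c'\<bar> * E \<le> \<bar>real_of_int c'\<bar> * 2" using E2 by (intro mult_left_mono) auto
  ultimately have Qpos: "\<bar>real_of_int Qi\<bar> > 0" using h3 unfolding Qc C_def by linarith
  define q where "q = nat \<bar>Qi\<bar>"
  have q1: "q \<ge> 1" using Qpos unfolding q_def by simp
  have rq: "real q = \<bar>real_of_int Qi\<bar>" unfolding q_def by simp
  have d1: "dnint (real q * \<alpha>) \<le> \<bar>real_of_int Qi * \<alpha> - real_of_int Zi\<bar>"
    unfolding q_def by (rule dnint_nat_abs)
  have d2: "dnint (real q * \<beta>) \<le> \<bar>real_of_int Qi * \<beta> - real_of_int Ri\<bar>"
    unfolding q_def by (rule dnint_nat_abs)
  have Qb: "\<bar>real_of_int Qi\<bar> \<le> (\<bar>real_of_int c'\<bar> + \<bar>real_of_int d'\<bar>) * (2 * qN * qn)"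
  proof -
    have "\<bar>real_of_int Qi\<bar> \<le> \<bar>real_of_int d'\<bar> * \<bar>real_of_int A11\<bar> + \<bar>real_of_int c'\<bar> * \<bar>real_of_int A12\<bar>"
      unfolding Qc by (metis abs_mult abs_triangle_ineq)
    also have "\<dots> \<le> \<bar>real_of_int d'\<bar> * (2 * qN * qn) + \<bar>real_of_int c'\<bar> * (2 * qN * qn)"
      using r1 r2 r3 qN1 unfolding qn_def qN_def by (intro add_mono mult_left_mono) auto
    finally show ?thesis by (simp add: algebra_simps)
  qed
  have "real q * dnint (real q * \<alpha>) * dnint (real q * \<beta>) \<le>
     ((\<bar>real_of_int c'\<bar> + \<bar>real_of_int d'\<bar>) * (2 * qN * qn)) * ((\<bar>real_of_int c'\<bar> + \<bar>real_of_int d'\<bar>) * E)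
       * ((\<bar>real_of_int a'\<bar> + \<bar>real_of_int c'\<bar> * \<bar>\<beta>\<bar>) * E)"
  proof (rule prod3_mono)
    show "0 \<le> real q" by simp
    show "0 \<le> dnint (real q * \<alpha>)" by (rule dnint_nonneg)
    show "0 \<le> dnint (real q * \<beta>)" by (rule dnint_nonneg)
    show "real q \<le> (\<bar>real_of_int c'\<bar> + \<bar>real_of_int d'\<bar>) * (2 * qN * qn)" using Qb rq by simp
    show "dnint (real q * \<alpha>) \<le> (\<bar>real_of_int c'\<bar> + \<bar>real_of_int d'\<bar>) * E"
      using d1 h1 unfolding Qc Zc by simp
    show "dnint (real q * \<beta>) \<le> (\<bar>real_of_int a'\<bar> + \<bar>real_of_int c'\<bar> * \<bar>\<beta>\<bar>) * E"
      using d2 h2 unfolding Qc Rc by simp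
  qed
  also have "\<dots> = K * (qn ^ 3 / qN)"
    unfolding K_def E_def using qN1 Kid[of qN "\<bar>real_of_int c'\<bar> + \<bar>real_of_int d'\<bar>" qn "\<bar>real_of_int a'\<bar> + \<bar>real_of_int c'\<bar> * \<bar>\<beta>\<bar>"]
    by simp
  also have "\<dots> \<le> K * (B ^ 3 * (Mp ^ (3 * n) / mp ^ N))"
  proof (intro mult_left_mono K0)
    have mpN: "mp ^ N \<le> qN" unfolding qn_def qN_def using L[of N] uL unfolding N_def by simp
    have mpN0: "mp ^ N > 0" using mp1 by simp
    have "qn ^ 3 \<le> (B * Mp ^ n) ^ 3" using B[of n] qn1 unfolding qn_def qN_def by (intro power_mono) auto
    also have "\<dots> = B ^ 3 * Mp ^ (3 * n)" by (simp add: power_mult_distrib power_mult[symmetric] mult.commute)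
    finally have "qn ^ 3 \<le> B ^ 3 * Mp ^ (3 * n)" .
    then have "qn ^ 3 / qN \<le> B ^ 3 * Mp ^ (3 * n) / qN" using qN1 by (intro divide_right_mono) auto
    also have "\<dots> \<le> B ^ 3 * Mp ^ (3 * n) / mp ^ N"
      using mpN mpN0 B1 mp1 mpM qN1 by (intro divide_left_mono) (auto intro: mult_pos_pos)
    finally show "qn ^ 3 / qN \<le> B ^ 3 * (Mp ^ (3 * n) / mp ^ N)" by simp
  qed
  also have "\<dots> \<le> K * (B ^ 3 * exp (- cc * real u))"
    using exp_bound[OF x0 mp1 mpM xr xnu] K0 B1 unfolding cc_def N_def
    by (intro mult_left_mono) auto
  also have "\<dots> \<le> \<delta>"
  proof -
    have "- ln (\<delta> / D) / cc \<le> T" unfolding T_def by (rule max.cobounded2)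
    then have "- ln (\<delta> / D) / cc \<le> real u" using uT by (rule order.trans)
    then have "- ln (\<delta> / D) \<le> real u * cc" by (subst (asm) pos_divide_le_eq[OF cc0])
    then have "- ln (\<delta> / D) \<le> cc * real u" by (simp only: mult.commute)
    then have "exp (- cc * real u) \<le> exp (ln (\<delta> / D))" by simp
    also have "\<dots> = \<delta> / D" using \<delta> D0 by simp
    finally have ex: "exp (- cc * real u) \<le> \<delta> / D" .
    have KB: "0 \<le> K * B^3" using K0 B1 by simp
    have "K * (B ^ 3 * exp (- cc * real u)) = (K * B^3) * exp (- cc * real u)" by (simp only: mult.assoc)
    also have "\<dots> \<le> (K * B ^ 3) * (\<delta> / D)" by (rule mult_left_mono[OF ex KB])
    also have "\<dots> \<le> D * (\<delta> / D)" using \<delta> D0 unfolding D_def by (intro mult_right_mono) auto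
    also have "\<dots> = \<delta>" using D0 by simp
    finally show ?thesis .
  qed
  finally show ?thesis using q1 by blast
qed

end


theorem theorem5:
  fixes \<alpha> x M m :: real and a :: "nat \<Rightarrow> nat" and U V :: "nat \<Rightarrow> nat list"
  assumes cf: "is_cf_expansion \<alpha> a"
    and bad: "\<alpha> \<in> Bad"
    and x_rat: "x \<in> \<rat>" and x_pos: "x > 0"
    and words: "\<forall>k\<ge>1. (\<forall>w\<in>set (V k @ U k @ rev (U k)). w > 0)
                      \<and> begins_with a (V k @ U k @ rev (U k))
                      \<and> length (U (Suc k)) > length (U k)
                      \<and> real (length (U k)) \<ge> x * real (length (V k))"
    and M_def: "limsup (\<lambda>l. ereal (real (cfq a l) powr (1 / real l))) = ereal M"
    and m_def: "liminf (\<lambda>l. ereal (real (cfq a l) powr (1 / real l))) = ereal m"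
    and x_big: "x > 3 / 2 * (ln M / ln m) - 1 / 2"
  shows "\<forall>\<beta>. (\<exists>a' b' c' d' :: int. a' * d' - b' * c' \<noteq> 0 \<and>
                 \<beta> = (of_int a' * \<alpha> + of_int b') / (of_int c' * \<alpha> + of_int d'))
           \<longrightarrow> (INF q\<in>{1::nat..}. real q * dnint (real q * \<alpha>) * dnint (real q * \<beta>)) = 0"
proof (intro allI impI)
  fix \<beta>
  assume "\<exists>a' b' c' d' :: int. a' * d' - b' * c' \<noteq> 0 \<and>
                 \<beta> = (of_int a' * \<alpha> + of_int b') / (of_int c' * \<alpha> + of_int d')"
  then obtain a' b' c' d' :: int where
    bdef: "\<beta> = (of_int a' * \<alpha> + of_int b') / (of_int c' * \<alpha> + of_int d')" by blast
  have apos: "\<And>n. n \<ge> 1 \<Longrightarrow> a n > 0" using cf unfolding is_cf_expansion_def by auto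
  interpret cfa a by unfold_locales (rule apos)
  have lim: "xc \<longlonglongrightarrow> \<alpha>"
  proof -
    have "xc = (\<lambda>n. real (cfp a n) / real (cfq a n))" by (rule ext) (simp add: xc_def)
    then show ?thesis using cf unfolding is_cf_expansion_def by simp
  qed
  have m1: "1 < m"
  proof -
    have "(1::real) < 2 powr (1/4)" by simp
    then show ?thesis using m_ge[OF m_def] by linarith
  qed
  have mM: "m \<le> M"
  proof -
    have "liminf (\<lambda>l. ereal (real (cfq a l) powr (1 / real l))) \<le> limsup (\<lambda>l. ereal (real (cfq a l) powr (1 / real l)))"
      by (rule Liminf_le_Limsup) simp
    then show ?thesis using M_def m_def by simp
  qed
  obtain Mp mp where rates: "M < Mp" "1 < mp" "mp < m" "3 * ln Mp / ln mp - 1 < 2 * x"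
    using choose_rates[OF m1 mM x_big] by blast
  have Mp1: "1 \<le> Mp" using rates m1 mM by simp
  obtain B where B: "B \<ge> 1" "\<And>l. real (cfq a l) \<le> B * Mp ^ l"
    using upper_growth[OF M_def rates(1) Mp1] by blast
  obtain L where L: "\<And>l. l \<ge> L \<Longrightarrow> mp ^ l \<le> real (cfq a l)"
    using lower_growth[OF m_def rates(3)] rates(2) by auto
  have mpM: "mp \<le> Mp" using rates mM by simp
  show "(INF q\<in>{1::nat..}. real q * dnint (real q * \<alpha>) * dnint (real q * \<beta>)) = 0"
  proof (rule INF_zero)
    fix q :: nat
    show "0 \<le> real q * dnint (real q * \<alpha>) * dnint (real q * \<beta>)"
      using dnint_nonneg by (intro mult_nonneg_nonneg) auto
  next
    fix \<delta> :: real assume \<delta>: "\<delta> > 0"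
    show "\<exists>q\<ge>1. real q * dnint (real q * \<alpha>) * dnint (real q * \<beta>) \<le> \<delta>"
    proof (cases "of_int c' * \<alpha> + of_int d' = 0")
      case True
      then have "\<beta> = 0" using bdef by simp
      then have "real 1 * dnint (real 1 * \<alpha>) * dnint (real 1 * \<beta>) \<le> \<delta>"
        using \<delta> by (simp add: dnint_def)
      then show ?thesis by blast
    next
      case False
      show ?thesis
        by (rule main_step[OF lim False bdef x_pos words B(1) B(2) L rates(2) mpM rates(4) \<delta>])
    qed
  qed
qed


end
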